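(* Let $G$ be a finite, connected, undirected, unweighted graph without loops or multi-edges, with vertex set $V(G)$ of size $n \ge 2$. For distinct $v,u \in V(G)$ let $d(v,u)$ be the length (number of edges) of a shortest path between $v$ and $u$, let $\sigma(v,u) \ge 1$ be the number of distinct shortest paths between $v$ and $u$, and let $\Delta(G) = \max_{v,u \in V(G)} d(v,u)$ be the diameter of $G$. Define \[ ADPL(G) = \frac{1}{n(n-1)} \sum_{v \in V(G)} \sum_{u \in V(G)\setminus\{v\}} \frac{d(v,u)}{\sigma(v,u)}. \] Let $T \ge 1$ be an integer and let $v_1,\dots,v_T$ be vertices each chosen independently and uniformly at random from $V(G)$. For $1 \le t \le T$ set \[ \beta_t = \frac{1}{n-1} \sum_{u \in V(G)\setminus\{v_t\}} \frac{d(v_t,u)}{\sigma(v_t,u)}, \qquad \beta = \frac{1}{T}\sum_{t=1}^T \beta_t . \] Then for every $\epsilon > 0$, \[ \mathbf{P}\left[\,\left|ADPL(G) - \beta\right| > \epsilon\,\right] \le 2\exp\!\left(-2T\left(\frac{\epsilon}{\Delta(G)}\right)^2\right). \]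
   Context: The random variable $\beta$ is the output of the paper's sampling algorithm for estimating average discriminative path length: in each of $T$ iterations it picks a vertex uniformly at random (independently across iterations), computes distances and numbers of shortest paths from it to all other vertices, forms $\beta_t$, and finally outputs the average $\beta$. *)

theory Defs
  imports "HOL-Probability.Probability"
begin

text \<open>A finite simple graph is given by a vertex set V and a symmetric, irreflexive
edge relation E on V.\<close>

definition is_walk :: "'a set \<Rightarrow> ('a \<Rightarrow> 'a \<Rightarrow> bool) \<Rightarrow> 'a list \<Rightarrow> bool" where
  "is_walk V E xs \<longleftrightarrow> xs \<noteq> [] \<and> set xs \<subseteq> V \<and>
     (\<forall>i. Suc i < length xs \<longrightarrow> E (xs ! i) (xs ! Suc i))"

definition walks_len :: "'a set \<Rightarrow> ('a \<Rightarrow> 'a \<Rightarrow> bool) \<Rightarrow> 'a \<Rightarrow> 'a \<Rightarrow> nat \<Rightarrow> 'a list set" where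
  "walks_len V E v u k = {xs. is_walk V E xs \<and> hd xs = v \<and> last xs = u \<and> length xs = Suc k}"

definition graph_connected :: "'a set \<Rightarrow> ('a \<Rightarrow> 'a \<Rightarrow> bool) \<Rightarrow> bool" where
  "graph_connected V E \<longleftrightarrow> (\<forall>v\<in>V. \<forall>u\<in>V. \<exists>k. walks_len V E v u k \<noteq> {})"

definition gdist :: "'a set \<Rightarrow> ('a \<Rightarrow> 'a \<Rightarrow> bool) \<Rightarrow> 'a \<Rightarrow> 'a \<Rightarrow> nat" where
  "gdist V E v u = (LEAST k. walks_len V E v u k \<noteq> {})"

text \<open>sigma(v,u): number of shortest paths (walks of minimal length are exactly the
shortest paths; in a simple graph a path is determined by its vertex sequence).\<close>
definition nsp :: "'a set \<Rightarrow> ('a \<Rightarrow> 'a \<Rightarrow> bool) \<Rightarrow> 'a \<Rightarrow> 'a \<Rightarrow> nat" where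
  "nsp V E v u = card (walks_len V E v u (gdist V E v u))"

definition diameter :: "'a set \<Rightarrow> ('a \<Rightarrow> 'a \<Rightarrow> bool) \<Rightarrow> nat" where
  "diameter V E = Max {gdist V E v u | v u. v \<in> V \<and> u \<in> V}"

definition adpl :: "'a set \<Rightarrow> ('a \<Rightarrow> 'a \<Rightarrow> bool) \<Rightarrow> real" where
  "adpl V E = 1 / (real (card V) * (real (card V) - 1)) *
     (\<Sum>v\<in>V. \<Sum>u\<in>V - {v}. real (gdist V E v u) / real (nsp V E v u))"

definition beta_v :: "'a set \<Rightarrow> ('a \<Rightarrow> 'a \<Rightarrow> bool) \<Rightarrow> 'a \<Rightarrow> real" where
  "beta_v V E v = 1 / (real (card V) - 1) *
     (\<Sum>u\<in>V - {v}. real (gdist V E v u) / real (nsp V E v u))"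

end

theory Submission
  imports Defs
begin

lemma gdist_pos:
  assumes "graph_connected V E" "v \<in> V" "u \<in> V" "v \<noteq> u"
  shows "gdist V E v u \<ge> 1"
proof -
  obtain k where k: "walks_len V E v u k \<noteq> {}" using assms unfolding graph_connected_def by blast
  have "walks_len V E v u (gdist V E v u) \<noteq> {}"
    unfolding gdist_def by (rule LeastI[of _ k]) (rule k)
  then obtain xs where "xs \<in> walks_len V E v u (gdist V E v u)" by blast
  then have "hd xs = v" "last xs = u" "length xs = Suc (gdist V E v u)"
    unfolding walks_len_def by auto
  show ?thesis
  proof (rule ccontr)
    assume "\<not> ?thesis"
    then have "length xs = 1" using \<open>length xs = Suc (gdist V E v u)\<close> by simp
    then obtain x where "xs = [x]" by (metis One_nat_def length_0_conv length_Suc_conv)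
    then show False using \<open>hd xs = v\<close> \<open>last xs = u\<close> assms(4) by simp
  qed
qed

lemma term_bounds:
  fixes d s :: nat
  shows "0 \<le> real d / real s \<and> real d / real s \<le> real d"
proof (cases "s = 0")
  case False
  then have "real s \<ge> 1" by simp
  moreover have "real d * 1 \<le> real d * real s" using \<open>real s \<ge> 1\<close> by (intro mult_left_mono) auto
  ultimately show ?thesis by (simp add: divide_le_eq)
qed simp

theorem proposition2:
  fixes V :: "'a set" and E :: "'a \<Rightarrow> 'a \<Rightarrow> bool" and T :: nat and \<epsilon> :: real
  assumes "finite V" and "card V \<ge> 2"
    and "\<And>x y. E x y \<Longrightarrow> x \<in> V \<and> y \<in> V"
    and "\<And>x y. E x y \<Longrightarrow> E y x"
    and "\<And>x. \<not> E x x"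
    and "graph_connected V E"
    and "T \<ge> 1" and "\<epsilon> > 0"
  shows "measure_pmf.prob (Pi_pmf {..<T} undefined (\<lambda>_. pmf_of_set V))
           {vs. \<bar>adpl V E - (1 / real T) * (\<Sum>t<T. beta_v V E (vs t))\<bar> > \<epsilon>}
         \<le> 2 * exp (- 2 * real T * (\<epsilon> / real (diameter V E))\<^sup>2)"
proof -
  define D where "D = diameter V E"
  define M where "M = Pi_pmf {..<T} undefined (\<lambda>_. pmf_of_set V)"
  define n where "n = card V"
  have Vne: "V \<noteq> {}" using assms(2) by auto
  have fin: "finite {gdist V E v u | v u. v \<in> V \<and> u \<in> V}"
  proof -
    have "{gdist V E v u | v u. v \<in> V \<and> u \<in> V} = (\<lambda>(v,u). gdist V E v u) ` (V \<times> V)" by auto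
    then show ?thesis using assms(1) by simp
  qed
  have leD: "gdist V E v u \<le> D" if "v \<in> V" "u \<in> V" for v u
    unfolding D_def diameter_def using that by (intro Max_ge[OF fin]) auto
  obtain v u where vu: "v \<in> V" "u \<in> V" "v \<noteq> u"
  proof -
    have "\<not> card V \<le> 1" using assms(2) by simp
    then show ?thesis using that by (metis card_le_Suc0_iff_eq assms(1) One_nat_def)
  qed
  have D1: "D \<ge> 1" using gdist_pos[OF assms(6) vu] leD[OF vu(1,2)] by simp
  have n1: "real n - 1 > 0" using assms(2) by (simp add: n_def)
  have bnd: "beta_v V E w \<in> {0..real D}" if "w \<in> V" for w
  proof -
    let ?f = "\<lambda>x. real (gdist V E w x) / real (nsp V E w x)"
    have c: "card (V - {w}) = n - 1" using that assms(1) by (simp add: n_def)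
    have "(\<Sum>x\<in>V - {w}. ?f x) \<le> (\<Sum>x\<in>V - {w}. real D)"
      apply (rule sum_mono)
      using term_bounds[of "gdist V E w _" "nsp V E w _"] leD[OF that] by (meson DiffD1 of_nat_le_iff order_trans)
    also have "\<dots> = (real n - 1) * real D" using c assms(2) n_def by (simp add: of_nat_diff)
    finally have up: "(\<Sum>x\<in>V - {w}. ?f x) \<le> (real n - 1) * real D" .
    have lo: "(\<Sum>x\<in>V - {w}. ?f x) \<ge> 0" by (rule sum_nonneg) (simp add: term_bounds)
    have "beta_v V E w = (\<Sum>x\<in>V - {w}. ?f x) / (real n - 1)"
      unfolding beta_v_def n_def by simp
    then show ?thesis using up lo n1 by (simp add: divide_le_eq mult.commute)
  qed
  interpret H: Hoeffding_ineq_iid "measure_pmf M" "{..<T}" "\<lambda>t f. beta_v V E (f t)"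
    "\<lambda>f. beta_v V E (f 0)" 0 "real D" "measure_pmf.expectation M (\<lambda>f. beta_v V E (f 0))"
  proof unfold_locales
    show "prob_space.indep_vars (measure_pmf M) (\<lambda>_. borel) (\<lambda>t f. beta_v V E (f t)) {..<T}"
      unfolding M_def
      by (intro prob_space.indep_vars_compose2[OF _ indep_vars_Pi_pmf])
         (auto simp: measure_pmf.prob_space_axioms)
  next
    fix i assume i: "i \<in> {..<T}"
    have "distr (measure_pmf M) borel (\<lambda>f. beta_v V E (f i)) =
          distr (measure_pmf (map_pmf (\<lambda>f. f i) M)) borel (beta_v V E)"
      unfolding map_pmf_rep_eq by (subst distr_distr) (auto simp: o_def)
    also have "map_pmf (\<lambda>f. f i) M = pmf_of_set V"
      unfolding M_def using i by (subst Pi_pmf_component) auto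
    also have "pmf_of_set V = map_pmf (\<lambda>f. f 0) M"
      unfolding M_def using assms(7) by (subst Pi_pmf_component) auto
    also have "distr (measure_pmf (map_pmf (\<lambda>f. f 0) M)) borel (beta_v V E) =
          distr (measure_pmf M) borel (\<lambda>f. beta_v V E (f 0))"
      unfolding map_pmf_rep_eq by (subst distr_distr) (auto simp: o_def)
    finally show "distr (measure_pmf M) borel (\<lambda>f. beta_v V E (f i)) =
          distr (measure_pmf M) borel (\<lambda>f. beta_v V E (f 0))" .
  next
    have "set_pmf (map_pmf (\<lambda>f. f 0) M) = V"
      unfolding M_def using assms(7) assms(1) Vne by (subst Pi_pmf_component) auto
    then show "AE x in measure_pmf M. beta_v V E (x 0) \<in> {0..real D}"
      using bnd by (auto simp: AE_measure_pmf_iff)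
  qed simp_all
  have mu: "measure_pmf.expectation M (\<lambda>f. beta_v V E (f 0)) = adpl V E"
  proof -
    have "measure_pmf.expectation M (\<lambda>f. beta_v V E (f 0)) =
          measure_pmf.expectation (map_pmf (\<lambda>f. f 0) M) (beta_v V E)" by simp
    also have "map_pmf (\<lambda>f. f 0) M = pmf_of_set V"
      unfolding M_def using assms(7) by (subst Pi_pmf_component) auto
    also have "measure_pmf.expectation (pmf_of_set V) (beta_v V E) = (\<Sum>w\<in>V. beta_v V E w) / real n"
      using assms(1) Vne by (simp add: integral_pmf_of_set n_def)
    also have "\<dots> = adpl V E"
      unfolding adpl_def beta_v_def n_def by (simp add: sum_divide_distrib[symmetric] divide_divide_eq_left mult.commute)
    finally show ?thesis .
  qed
  have cardT: "card {..<T} = T" by simp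
  have e0: "\<epsilon> \<ge> 0" using assms(8) by simp
  have D0: "0 < real D" using D1 by simp
  have Tne: "{..<T} \<noteq> {}" using assms(7) lessThan_empty_iff by (metis not_one_le_zero)
  note main = H.Hoeffding_ineq_abs_ge'[OF e0 D0 Tne, unfolded mu cardT]
  have "measure_pmf.prob M {vs. \<bar>adpl V E - (1 / real T) * (\<Sum>t<T. beta_v V E (vs t))\<bar> > \<epsilon>}
      \<le> measure_pmf.prob M {x \<in> space (measure_pmf M). \<bar>(\<Sum>t\<in>{..<T}. beta_v V E (x t)) / real (card {..<T}) - adpl V E\<bar> \<ge> \<epsilon>}"
    by (rule measure_pmf.finite_measure_mono) (auto simp: abs_minus_commute)
  also have "\<dots> \<le> 2 * exp (- 2 * real T * \<epsilon>\<^sup>2 / (real D - 0)\<^sup>2)"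
    using main by simp
  also have "\<dots> = 2 * exp (- 2 * real T * (\<epsilon> / real D)\<^sup>2)"
    by (simp add: power_divide)
  finally show ?thesis unfolding M_def D_def .
qed

end
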